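(* Let $G$ be the general event structure with events $\{a,b,c,d,e\}$, in which a finite set is consistent iff it does not contain both $a$ and $b$, and whose enabling relation is the least one (closed under consistent supersets of the left-hand side) with $\emptyset\vdash a$, $\emptyset\vdash b$, $\emptyset\vdash c$, $\emptyset\vdash d$, $\{b,c\}\vdash e$ and $\{d\}\vdash e$. Let $\mathcal H=\{x\setminus\{b\}\mid x\text{ a configuration of }G\}$. Then there is no general event structure with event set $\{a,c,d,e\}$ whose set of configurations is exactly $\mathcal H$.
   Context: A general event structure is $(E,\mathrm{Con},\vdash)$ with $\mathrm{Con}$ a nonempty subset-closed family of finite subsets of $E$ and $\vdash\subseteq\mathrm{Con}\times E$ such that $Y\in\mathrm{Con}$, $X\subseteq Y$, $X\vdash e$ imply $Y\vdash e$. A configuration is a subset $x\subseteq E$ that is consistent (all finite subsets in $\mathrm{Con}$) and secured (for each $e\in x$ there are $e_1,\dots,e_n\in x$ with $e_n=e$ and $\{e_1,\dots,e_{i-1}\}\vdash e_i$ for every $i\le n$). *)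

theory Defs
  imports Main
begin

definition ges :: "'a set \<Rightarrow> 'a set set \<Rightarrow> ('a set \<Rightarrow> 'a \<Rightarrow> bool) \<Rightarrow> bool" where
  "ges E Con ent \<longleftrightarrow>
     Con \<noteq> {} \<and>
     (\<forall>X\<in>Con. finite X \<and> X \<subseteq> E) \<and>
     (\<forall>Y\<in>Con. \<forall>X. X \<subseteq> Y \<longrightarrow> X \<in> Con) \<and>
     (\<forall>X e. ent X e \<longrightarrow> X \<in> Con \<and> e \<in> E) \<and>
     (\<forall>X Y e. Y \<in> Con \<longrightarrow> X \<subseteq> Y \<longrightarrow> ent X e \<longrightarrow> ent Y e)"

definition consistent :: "'a set set \<Rightarrow> 'a set \<Rightarrow> bool" where
  "consistent Con x \<longleftrightarrow> (\<forall>X. finite X \<longrightarrow> X \<subseteq> x \<longrightarrow> X \<in> Con)"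

definition secured :: "('a set \<Rightarrow> 'a \<Rightarrow> bool) \<Rightarrow> 'a set \<Rightarrow> bool" where
  "secured ent x \<longleftrightarrow>
     (\<forall>e\<in>x. \<exists>es. es \<noteq> [] \<and> last es = e \<and> set es \<subseteq> x \<and>
        (\<forall>i<length es. ent (set (take i es)) (es ! i)))"

definition configs :: "'a set \<Rightarrow> 'a set set \<Rightarrow> ('a set \<Rightarrow> 'a \<Rightarrow> bool) \<Rightarrow> 'a set set" where
  "configs E Con ent = {x. x \<subseteq> E \<and> consistent Con x \<and> secured ent x}"

datatype ev = a | b | c | d | e

definition ConG :: "ev set set" where
  "ConG = {X. finite X \<and> \<not> (a \<in> X \<and> b \<in> X)}"

text \<open>The least enabling relation closed under consistent supersets containing
  the generators {} |- a, {} |- b, {} |- c, {} |- d, {b,c} |- e, {d} |- e.\<close>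
definition entG :: "ev set \<Rightarrow> ev \<Rightarrow> bool" where
  "entG X y \<longleftrightarrow> X \<in> ConG \<and>
     (y \<in> {a, b, c, d} \<or> (y = e \<and> ({b, c} \<subseteq> X \<or> {d} \<subseteq> X)))"

definition H :: "ev set set" where
  "H = (\<lambda>x. x - {b}) ` configs UNIV ConG entG"

end

theory Submission
  imports Defs
begin

lemma chain_secured:
  assumes "\<forall>i<length es. ent (set (take i es)) (es ! i)"
  shows "secured ent (set es)"
  unfolding secured_def
proof
  fix y assume "y \<in> set es"
  then obtain i where i: "i < length es" "es ! i = y" by (metis in_set_conv_nth)
  show "\<exists>es'. es' \<noteq> [] \<and> last es' = y \<and> set es' \<subseteq> set es \<and>
        (\<forall>j<length es'. ent (set (take j es')) (es' ! j))"
  proof (intro exI conjI)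
    show "take (Suc i) es \<noteq> []" using i by auto
    show "last (take (Suc i) es) = y" using i by (simp add: take_Suc_conv_app_nth)
    show "set (take (Suc i) es) \<subseteq> set es" by (rule set_take_subset)
    show "\<forall>j<length (take (Suc i) es). ent (set (take j (take (Suc i) es))) (take (Suc i) es ! j)"
      using assms i by (auto simp: min_def)
  qed
qed

lemma secured_Un: "secured ent x \<Longrightarrow> secured ent y \<Longrightarrow> secured ent (x \<union> y)"
proof -
  assume x: "secured ent x" and y: "secured ent y"
  show ?thesis unfolding secured_def
  proof
    fix z assume "z \<in> x \<union> y"
    then show "\<exists>es. es \<noteq> [] \<and> last es = z \<and> set es \<subseteq> x \<union> y \<and>
        (\<forall>i<length es. ent (set (take i es)) (es ! i))"
    proof
      assume "z \<in> x"
      then obtain es where "es \<noteq> [] \<and> last es = z \<and> set es \<subseteq> x \<and>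
        (\<forall>i<length es. ent (set (take i es)) (es ! i))" using x unfolding secured_def by blast
      then show ?thesis by blast
    next
      assume "z \<in> y"
      then obtain es where "es \<noteq> [] \<and> last es = z \<and> set es \<subseteq> y \<and>
        (\<forall>i<length es. ent (set (take i es)) (es ! i))" using y unfolding secured_def by blast
      then show ?thesis by blast
    qed
  qed
qed

lemma consG: "\<not> (a \<in> x \<and> b \<in> x) \<Longrightarrow> consistent ConG x"
  unfolding consistent_def ConG_def by auto

lemma inH:
  assumes "\<forall>i<length es. entG (set (take i es)) (es ! i)" "\<not> (a \<in> set es \<and> b \<in> set es)"
  shows "set es - {b} \<in> H"
  unfolding H_def configs_def using chain_secured[OF assms(1)] consG[OF assms(2)] by blast

lemma H1: "{a,c} \<in> H"
proof -
  have "set [a,c] - {b} \<in> H"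
    by (rule inH) (auto simp: entG_def ConG_def less_Suc_eq nth_Cons')
  thus ?thesis by simp
qed

lemma H2: "{c,e} \<in> H"
proof -
  have "set [b,c,e] - {b} \<in> H"
    by (rule inH) (auto simp: entG_def ConG_def less_Suc_eq nth_Cons')
  thus ?thesis by auto
qed

lemma H3: "{a,c,d,e} \<in> H"
proof -
  have "set [a,c,d,e] - {b} \<in> H"
    by (rule inH) (auto simp: entG_def ConG_def less_Suc_eq nth_Cons')
  thus ?thesis by auto
qed

lemma H4: "{a,c,e} \<notin> H"
proof
  assume "{a,c,e} \<in> H"
  then obtain x where x: "x \<in> configs UNIV ConG entG" "x - {b} = {a,c,e}"
    unfolding H_def by (auto simp del: insert_Diff_single)
  have cons: "consistent ConG x" and sec: "secured entG x" using x(1) unfolding configs_def by auto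
  have "b \<notin> x"
  proof
    assume "b \<in> x"
    hence "{a,b} \<subseteq> x" using x(2) by auto
    moreover have "finite {a,b}" by simp
    ultimately have "{a,b} \<in> ConG" using cons unfolding consistent_def by blast
    thus False unfolding ConG_def by simp
  qed
  hence xx: "x = {a,c,e}" using x(2) by (metis Diff_empty Diff_insert0)
  then obtain es where es: "es \<noteq> []" "last es = e" "set es \<subseteq> x"
    "\<forall>i<length es. entG (set (take i es)) (es ! i)"
  proof -
    have "e \<in> x" using xx by simp
    thus ?thesis using that sec unfolding secured_def by blast
  qed
  define i where "i = length es - 1"
  have i: "i < length es" "es ! i = e" using es(1,2) by (auto simp: i_def last_conv_nth)
  have "entG (set (take i es)) (es ! i)" using es(4) i(1) by blast
  hence "entG (set (take i es)) e" using i(2) by simp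
  moreover have "set (take i es) \<subseteq> {a,c,e}" using es(3) xx set_take_subset by (metis subset_trans)
  ultimately have "{b,c} \<subseteq> {a,c,e} \<or> {d} \<subseteq> {a,c,e}" unfolding entG_def by blast
  thus False by auto
qed

theorem mainTheorem10:
  shows "\<not> (\<exists>Con ent. ges {a, c, d, e} Con ent \<and> configs {a, c, d, e} Con ent = H)"
proof
  assume "\<exists>Con ent. ges {a, c, d, e} Con ent \<and> configs {a, c, d, e} Con ent = H"
  then obtain Con ent where eq: "configs {a, c, d, e} Con ent = H" by blast
  have m1: "{a,c} \<in> configs {a, c, d, e} Con ent" using H1 eq by simp
  have m2: "{c,e} \<in> configs {a, c, d, e} Con ent" using H2 eq by simp
  have m3: "{a,c,d,e} \<in> configs {a, c, d, e} Con ent" using H3 eq by simp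
  have s1: "secured ent {a,c}" using m1 unfolding configs_def by simp
  have s2: "secured ent {c,e}" using m2 unfolding configs_def by simp
  have c3: "consistent Con {a,c,d,e}" using m3 unfolding configs_def by simp
  have "secured ent ({a,c} \<union> {c,e})" by (rule secured_Un[OF s1 s2])
  hence s: "secured ent {a,c,e}" by (simp add: insert_commute)
  have "consistent Con {a,c,e}" using c3 unfolding consistent_def
    by (meson subset_insertI subset_trans insert_mono)
  hence "{a,c,e} \<in> configs {a, c, d, e} Con ent" using s unfolding configs_def by auto
  hence "{a,c,e} \<in> H" using eq by simp
  with H4 show False by contradiction
qed

end
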